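(* Let $T$ be a tree (without loops), $v$ a vertex of $T$ with neighbours $w_1,\dots,w_s$, and let $T_i$ be the connected component of $T\setminus v$ containing $w_i$. Then $\nu_2(T)-\nu_2(T\setminus v)\in\{0,1,2\}$ and: (i) $\nu_2(T)-\nu_2(T\setminus v)=2$ if and only if $v$ is saturated in $T$; (ii) $\nu_2(T)-\nu_2(T\setminus v)=1$ if and only if there exists $1\leq j\leq s$ such that the edge $vw_j$ is saturated in $T$ and $w_i$ is saturated in $T_i$ for all $i\neq j$; (iii) $\nu_2(T)-\nu_2(T\setminus v)=0$ if and only if $w_i$ is saturated in $T_i$ for all $1\leq i\leq s$.
   Context: A $2$-matching of a graph $G$ is a set of edges such that every vertex is incident to at most two of them; $\nu_2(G)$ is the maximum size of a $2$-matching and a $2$-matching of that size is called maximum. A vertex $w$ is saturated in $G$ if every maximum $2$-matching of $G$ has exactly two edges incident to $w$; an edge is saturated in $G$ if it belongs to every maximum $2$-matching of $G$. $T\setminus v$ denotes $T$ with the vertex $v$ and its incident edges deleted. *)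

theory Defs
  imports Main
begin

definition simple_graph :: "'a set \<Rightarrow> 'a set set \<Rightarrow> bool" where
  "simple_graph V E \<longleftrightarrow> finite V \<and> (\<forall>e\<in>E. \<exists>x y. x \<noteq> y \<and> x \<in> V \<and> y \<in> V \<and> e = {x, y})"

definition adj_rel :: "'a set set \<Rightarrow> ('a \<times> 'a) set" where
  "adj_rel E = {(x, y). {x, y} \<in> E}"

definition connected_graph :: "'a set \<Rightarrow> 'a set set \<Rightarrow> bool" where
  "connected_graph V E \<longleftrightarrow> (\<forall>x\<in>V. \<forall>y\<in>V. (x, y) \<in> (adj_rel E)\<^sup>*)"

definition has_cycle :: "'a set set \<Rightarrow> bool" where
  "has_cycle E \<longleftrightarrow> (\<exists>xs. length xs \<ge> 3 \<and> distinct xs \<and>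
      (\<forall>i < length xs. {xs ! i, xs ! ((i + 1) mod length xs)} \<in> E))"

definition is_tree :: "'a set \<Rightarrow> 'a set set \<Rightarrow> bool" where
  "is_tree V E \<longleftrightarrow> simple_graph V E \<and> V \<noteq> {} \<and> connected_graph V E \<and> \<not> has_cycle E"

definition neighbours :: "'a set set \<Rightarrow> 'a \<Rightarrow> 'a set" where
  "neighbours E v = {w. {v, w} \<in> E}"

definition deg_in :: "'a set set \<Rightarrow> 'a \<Rightarrow> nat" where
  "deg_in M v = card {e \<in> M. v \<in> e}"

definition is_2matching :: "'a set set \<Rightarrow> 'a set set \<Rightarrow> bool" where
  "is_2matching E M \<longleftrightarrow> M \<subseteq> E \<and> (\<forall>v. deg_in M v \<le> 2)"

definition nu2 :: "'a set set \<Rightarrow> nat" where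
  "nu2 E = Max {card M | M. is_2matching E M}"

definition max_2matching :: "'a set set \<Rightarrow> 'a set set \<Rightarrow> bool" where
  "max_2matching E M \<longleftrightarrow> is_2matching E M \<and> card M = nu2 E"

definition saturated_vertex :: "'a set set \<Rightarrow> 'a \<Rightarrow> bool" where
  "saturated_vertex E w \<longleftrightarrow> (\<forall>M. max_2matching E M \<longrightarrow> deg_in M w = 2)"

definition saturated_edge :: "'a set set \<Rightarrow> 'a set \<Rightarrow> bool" where
  "saturated_edge E e \<longleftrightarrow> (\<forall>M. max_2matching E M \<longrightarrow> e \<in> M)"

definition del_vertex_V :: "'a set \<Rightarrow> 'a \<Rightarrow> 'a set" where
  "del_vertex_V V v = V - {v}"

definition del_vertex_E :: "'a set set \<Rightarrow> 'a \<Rightarrow> 'a set set" where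
  "del_vertex_E E v = {e \<in> E. v \<notin> e}"

definition comp_V :: "'a set \<Rightarrow> 'a set set \<Rightarrow> 'a \<Rightarrow> 'a set" where
  "comp_V V E w = {u \<in> V. (w, u) \<in> (adj_rel E)\<^sup>*}"

definition comp_E :: "'a set \<Rightarrow> 'a set set \<Rightarrow> 'a \<Rightarrow> 'a set set" where
  "comp_E V E w = {e \<in> E. e \<subseteq> comp_V V E w}"

end

theory Submission
  imports Defs "HOL-Library.Transitive_Closure_Table"
begin


lemma deg_mono: "finite M \<Longrightarrow> M' \<subseteq> M \<Longrightarrow> deg_in M' x \<le> deg_in M x"
  unfolding deg_in_def by (rule card_mono) auto

lemma deg_Un: "finite M1 \<Longrightarrow> finite M2 \<Longrightarrow> deg_in (M1 \<union> M2) x \<le> deg_in M1 x + deg_in M2 x"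
proof -
  assume "finite M1" "finite M2"
  have "{e \<in> M1 \<union> M2. x \<in> e} = {e \<in> M1. x \<in> e} \<union> {e \<in> M2. x \<in> e}" by auto
  then show ?thesis unfolding deg_in_def by (metis card_Un_le)
qed

lemma two_sub: "is_2matching X M \<Longrightarrow> finite M \<Longrightarrow> M' \<subseteq> M \<Longrightarrow> M' \<subseteq> Y \<Longrightarrow> is_2matching Y M'"
  unfolding is_2matching_def by (meson deg_mono le_trans subset_trans)

lemma fin_2m: "finite X \<Longrightarrow> is_2matching X M \<Longrightarrow> finite M"
  unfolding is_2matching_def using finite_subset by blast

lemma nu2_fin: "finite X \<Longrightarrow> finite {card M | M. is_2matching X M}"
proof -
  assume f: "finite X"
  have "{card M | M. is_2matching X M} \<subseteq> card ` Pow X" unfolding is_2matching_def by auto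
  then show ?thesis using f finite_subset by blast
qed

lemma empty_2m: "is_2matching X {}"
  unfolding is_2matching_def deg_in_def by simp

lemma nu2_ge: "finite X \<Longrightarrow> is_2matching X M \<Longrightarrow> card M \<le> nu2 X"
  unfolding nu2_def by (rule Max_ge) (auto intro: nu2_fin)

lemma nu2_ex: "finite X \<Longrightarrow> \<exists>M. max_2matching X M"
proof -
  assume f: "finite X"
  have "nu2 X \<in> {card M | M. is_2matching X M}"
    unfolding nu2_def using nu2_fin[OF f] empty_2m by (intro Max_in) auto
  then show ?thesis unfolding max_2matching_def by auto
qed

lemma dbl_inj: "{v, i} = {v, j} \<longleftrightarrow> i = j"
  by (auto simp: doubleton_eq_iff)




lemma comb_main:
  fixes E :: "'a set set" and v :: 'a and N :: "'a set" and A :: "'a \<Rightarrow> 'a set set" and C :: "'a \<Rightarrow> 'a set"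
  assumes finE: "finite E"
    and edg: "\<forall>e\<in>E. \<exists>x y. x \<noteq> y \<and> e = {x, y}"
    and Ndef: "N = neighbours E v"
    and cover: "del_vertex_E E v = \<Union> (A ` N)"
    and AC: "\<forall>i\<in>N. \<forall>e\<in>A i. e \<subseteq> C i"
    and iC: "\<forall>i\<in>N. i \<in> C i"
    and vC: "\<forall>i\<in>N. v \<notin> C i"
    and disj: "\<forall>i\<in>N. \<forall>j\<in>N. i \<noteq> j \<longrightarrow> C i \<inter> C j = {}"
  defines "d \<equiv> int (nu2 E) - int (nu2 (del_vertex_E E v))"
  shows "d \<in> {0, 1, 2}
    \<and> (d = 2 \<longleftrightarrow> saturated_vertex E v)
    \<and> (d = 1 \<longleftrightarrow> (\<exists>j \<in> N. saturated_edge E {v, j} \<and>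
                    (\<forall>i \<in> N - {j}. saturated_vertex (A i) i)))
    \<and> (d = 0 \<longleftrightarrow> (\<forall>i \<in> N. saturated_vertex (A i) i))"
proof -
  define E' where "E' = del_vertex_E E v"
  define S where "S = {e\<in>E. v \<in> e}"
  have E'def: "E' = {e\<in>E. v \<notin> e}" unfolding E'_def del_vertex_E_def by simp
  have finN: "finite N"
  proof -
    have "N \<subseteq> \<Union> E" unfolding Ndef neighbours_def by auto
    moreover have "finite (\<Union> E)" using finE edg by auto
    ultimately show ?thesis using finite_subset by blast
  qed
  have vN: "{v, i} \<in> E" if "i \<in> N" for i using that unfolding Ndef neighbours_def by simp
  have Sim: "S = (\<lambda>i. {v, i}) ` N"
  proof
    show "S \<subseteq> (\<lambda>i. {v, i}) ` N"
    proof
      fix e assume "e \<in> S"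
      then have eE: "e \<in> E" and ve: "v \<in> e" unfolding S_def by auto
      obtain x y where "e = {x, y}" using edg eE by blast
      then have "\<exists>i. e = {v, i}" using ve by auto
      then obtain i where "e = {v, i}" by blast
      then show "e \<in> (\<lambda>i. {v, i}) ` N" using eE unfolding Ndef neighbours_def by auto
    qed
    show "(\<lambda>i. {v, i}) ` N \<subseteq> S" using vN unfolding S_def by auto
  qed
  have inj: "inj_on (\<lambda>i. {v, i}) X" for X by (rule inj_onI) (simp add: dbl_inj)
  have AE': "A i \<subseteq> E'" if "i \<in> N" for i using cover that unfolding E'_def by auto
  have AE: "A i \<subseteq> E" if "i \<in> N" for i using AE' that unfolding E'def by auto
  have finA: "finite (A i)" if "i \<in> N" for i using AE[OF that] finE finite_subset by blast
  have nvA: "v \<notin> e" if "i \<in> N" "e \<in> A i" for i e using AE' that unfolding E'def by auto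
  have disjA: "A i \<inter> A j = {}" if "i \<in> N" "j \<in> N" "i \<noteq> j" for i j
  proof (rule ccontr)
    assume "A i \<inter> A j \<noteq> {}"
    then obtain e where e: "e \<in> A i" "e \<in> A j" by blast
    then have "e \<subseteq> C i \<inter> C j" using AC that by blast
    then have "e = {}" using disj that by blast
    moreover have "e \<in> E" using e AE that by blast
    ultimately show False using edg by blast
  qed
  define a where "a i = nu2 (A i)" for i
  define U where "U = {i\<in>N. \<not> saturated_vertex (A i) i}"
  define F where "F M = {i\<in>N. {v, i} \<in> M}" for M :: "'a set set"
  have finM: "finite M" if "is_2matching E M" for M using fin_2m[OF finE that] .
  have cardM: "card M = (\<Sum>i\<in>N. card (M \<inter> A i)) + card (F M)" if M: "is_2matching E M" for M
  proof -
    have ME: "M \<subseteq> E" using M unfolding is_2matching_def by simp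
    have sp: "M = (M \<inter> E') \<union> (M \<inter> S)" using ME unfolding E'def S_def by auto
    have dj: "(M \<inter> E') \<inter> (M \<inter> S) = {}" unfolding E'def S_def by auto
    have "M \<inter> E' = (\<Union>i\<in>N. M \<inter> A i)" using cover unfolding E'_def by auto
    moreover have "card (\<Union>i\<in>N. M \<inter> A i) = (\<Sum>i\<in>N. card (M \<inter> A i))"
      by (rule card_UN_disjoint) (use finN finM[OF M] disjA in auto)
    ultimately have c1: "card (M \<inter> E') = (\<Sum>i\<in>N. card (M \<inter> A i))" by simp
    have "M \<inter> S = (\<lambda>i. {v, i}) ` F M" unfolding Sim F_def by auto
    then have c2: "card (M \<inter> S) = card (F M)" using inj by (simp add: card_image)
    have "card M = card (M \<inter> E') + card (M \<inter> S)"
      using sp dj finM[OF M] by (metis card_Un_disjoint finite_Un)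
    then show ?thesis using c1 c2 by simp
  qed
  have degv: "deg_in M v = card (F M)" if M: "is_2matching E M" for M
  proof -
    have ME: "M \<subseteq> E" using M unfolding is_2matching_def by simp
    have "M \<inter> S = (\<lambda>i. {v, i}) ` F M" unfolding Sim F_def by auto
    moreover have "{e \<in> M. v \<in> e} = M \<inter> S" using ME unfolding S_def by auto
    ultimately have "{e \<in> M. v \<in> e} = (\<lambda>i. {v, i}) ` F M" by simp
    then show ?thesis unfolding deg_in_def using inj by (simp add: card_image)
  qed
  have F2: "card (F M) \<le> 2" if M: "is_2matching E M" for M
    using degv[OF M] M unfolding is_2matching_def by metis
  have finF: "finite (F M)" for M using finN unfolding F_def by auto
  have per: "card (M \<inter> A i) + (if i \<in> F M - U then 1 else 0) \<le> a i"
    if M: "is_2matching E M" and iN: "i \<in> N" for M i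
  proof -
    have m2: "is_2matching (A i) (M \<inter> A i)" using two_sub[OF M finM[OF M]] by blast
    have le: "card (M \<inter> A i) \<le> a i" unfolding a_def using nu2_ge[OF finA[OF iN] m2] .
    show ?thesis
    proof (cases "i \<in> F M - U")
      case False then show ?thesis using le by auto
    next
      case True
      then have vi: "{v, i} \<in> M" and sat: "saturated_vertex (A i) i"
        unfolding F_def U_def using iN by auto
      have "{e \<in> M \<inter> A i. i \<in> e} \<subseteq> {e \<in> M. i \<in> e} - {{v, i}}" using nvA[OF iN] by auto
      then have "deg_in (M \<inter> A i) i \<le> card ({e \<in> M. i \<in> e} - {{v, i}})"
        unfolding deg_in_def using finM[OF M] by (intro card_mono) auto
      also have "\<dots> = deg_in M i - 1" unfolding deg_in_def using vi by (simp add: card_Diff_singleton)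
      also have "\<dots> \<le> 1" proof -
        have "deg_in M i \<le> 2" using M unfolding is_2matching_def by blast
        then show ?thesis by arith
      qed
      finally have d1: "deg_in (M \<inter> A i) i \<le> 1" .
      have "card (M \<inter> A i) \<noteq> a i"
      proof
        assume "card (M \<inter> A i) = a i"
        then have "max_2matching (A i) (M \<inter> A i)" using m2 unfolding max_2matching_def a_def by simp
        then have "deg_in (M \<inter> A i) i = 2" using sat unfolding saturated_vertex_def by blast
        then show False using d1 by simp
      qed
      then show ?thesis using le True by simp
    qed
  qed
  have bound: "card M \<le> (\<Sum>i\<in>N. a i) + card (F M \<inter> U)" if M: "is_2matching E M" for M
  proof -
    have "(\<Sum>i\<in>N. card (M \<inter> A i) + (if i \<in> F M - U then 1 else 0)) \<le> (\<Sum>i\<in>N. a i)"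
      using per[OF M] by (intro sum_mono) auto
    moreover have "(\<Sum>i\<in>N. (if i \<in> F M - U then 1 else 0::nat)) = card (F M - U)"
    proof -
      have "F M - U \<subseteq> N" unfolding F_def by auto
      then have "N \<inter> (F M - U) = F M - U" by auto
      then show ?thesis using finN by (simp add: sum.If_cases set_diff_eq)
    qed
    moreover have "card (F M) = card (F M \<inter> U) + card (F M - U)"
    proof -
      have "F M = (F M \<inter> U) \<union> (F M - U)" by blast
      moreover have "(F M \<inter> U) \<inter> (F M - U) = {}" by blast
      ultimately show ?thesis using finF card_Un_disjoint
        by (metis finite_Diff finite_Int)
    qed
    ultimately show ?thesis using cardM[OF M] by (simp add: sum.distrib)
  qed
  have choose: "\<forall>i\<in>N. \<exists>Mi. max_2matching (A i) Mi \<and> (i \<in> U \<longrightarrow> deg_in Mi i \<le> 1)"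
  proof
    fix i assume iN: "i \<in> N"
    show "\<exists>Mi. max_2matching (A i) Mi \<and> (i \<in> U \<longrightarrow> deg_in Mi i \<le> 1)"
    proof (cases "i \<in> U")
      case True
      then obtain Mi where "max_2matching (A i) Mi" "deg_in Mi i \<noteq> 2"
        unfolding U_def saturated_vertex_def by auto
      moreover then have "deg_in Mi i \<le> 2" unfolding max_2matching_def is_2matching_def by blast
      ultimately show ?thesis by (intro exI[of _ Mi]) auto
    next
      case False then show ?thesis using nu2_ex[OF finA[OF iN]] by auto
    qed
  qed
  then obtain Mf where Mf: "\<And>i. i \<in> N \<Longrightarrow> max_2matching (A i) (Mf i) \<and> (i \<in> U \<longrightarrow> deg_in (Mf i) i \<le> 1)"
    by metis
  define W where "W = (\<Union>i\<in>N. Mf i)"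
  have MfA: "Mf i \<subseteq> A i" if "i \<in> N" for i using Mf[OF that] unfolding max_2matching_def is_2matching_def by blast
  have finMf: "finite (Mf i)" if "i \<in> N" for i using MfA[OF that] finA[OF that] finite_subset by blast
  have cardMf: "card (Mf i) = a i" if "i \<in> N" for i using Mf[OF that] unfolding max_2matching_def a_def by blast
  have WE': "W \<subseteq> E'" unfolding W_def using MfA AE' by blast
  have finW: "finite W" unfolding W_def using finN finMf by blast
  have cardW: "card W = (\<Sum>i\<in>N. a i)"
  proof -
    have "card W = (\<Sum>i\<in>N. card (Mf i))" unfolding W_def
      using finN finMf MfA disjA by (intro card_UN_disjoint) blast+
    then show ?thesis using cardMf by simp
  qed
  have degW: "deg_in W x \<le> 2 \<and> (x \<in> U \<longrightarrow> deg_in W x \<le> 1) \<and> deg_in W v = 0" for x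
  proof -
    have dv0: "{e \<in> W. v \<in> e} = {}" unfolding W_def using MfA nvA by blast
    have dv: "deg_in W v = 0" unfolding deg_in_def dv0 by simp
    show ?thesis
    proof (cases "\<exists>k\<in>N. x \<in> C k")
      case True
      then obtain k where kN: "k \<in> N" and xk: "x \<in> C k" by blast
      have "{e \<in> W. x \<in> e} = {e \<in> Mf k. x \<in> e}"
      proof
        show "{e \<in> W. x \<in> e} \<subseteq> {e \<in> Mf k. x \<in> e}"
        proof
          fix e assume e: "e \<in> {e \<in> W. x \<in> e}"
          then obtain i where iN: "i \<in> N" and ei: "e \<in> Mf i" unfolding W_def by blast
          have "x \<in> C i" using e ei MfA[OF iN] AC iN by blast
          then have "i = k" using disj iN kN xk by blast
          then show "e \<in> {e \<in> Mf k. x \<in> e}" using e ei by blast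
        qed
        show "{e \<in> Mf k. x \<in> e} \<subseteq> {e \<in> W. x \<in> e}" unfolding W_def using kN by blast
      qed
      then have eq: "deg_in W x = deg_in (Mf k) x" unfolding deg_in_def by simp
      have "deg_in (Mf k) x \<le> 2" using Mf[OF kN] unfolding max_2matching_def is_2matching_def by blast
      moreover have "x \<in> U \<Longrightarrow> deg_in (Mf k) x \<le> 1"
      proof -
        assume xU: "x \<in> U"
        then have xN: "x \<in> N" unfolding U_def by simp
        have "x = k" using disj xN kN iC xk by blast
        then show ?thesis using Mf[OF kN] xU by blast
      qed
      ultimately show ?thesis using eq dv by simp
    next
      case False
      have "{e \<in> W. x \<in> e} = {}"
      proof (rule ccontr)
        assume "{e \<in> W. x \<in> e} \<noteq> {}"
        then obtain e i where "i \<in> N" "e \<in> Mf i" "x \<in> e" unfolding W_def by blast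
        then show False using False MfA AC by blast
      qed
      then have "deg_in W x = 0" unfolding deg_in_def by (simp only: card.empty)
      then show ?thesis using dv by simp
    qed
  qed
  have constr: "\<exists>M. is_2matching E M \<and> card M = (\<Sum>i\<in>N. a i) + card G \<and> F M = G"
    if GU: "G \<subseteq> U" and G2: "card G \<le> 2" for G
  proof -
    define M where "M = W \<union> (\<lambda>i. {v, i}) ` G"
    have GN: "G \<subseteq> N" using GU unfolding U_def by auto
    have finG: "finite G" using GN finN finite_subset by blast
    have SG: "(\<lambda>i. {v, i}) ` G \<subseteq> S" using Sim GN by auto
    have dj: "W \<inter> (\<lambda>i. {v, i}) ` G = {}" using WE' SG unfolding E'def S_def by auto
    have cM: "card M = (\<Sum>i\<in>N. a i) + card G"
      unfolding M_def using card_Un_disjoint[OF finW _ dj] finG cardW inj by (simp add: card_image)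
    have ME: "M \<subseteq> E" unfolding M_def using WE' SG unfolding E'def S_def by auto
    have FM: "F M = G"
    proof -
      have "{v, i} \<notin> W" for i using WE' unfolding E'def by auto
      then show ?thesis unfolding F_def M_def using GN by (auto simp: dbl_inj)
    qed
    have dg: "deg_in M x \<le> 2" for x
    proof -
      have finSG: "finite ((\<lambda>i. {v, i}) ` G)" using finG by simp
      have le: "deg_in M x \<le> deg_in W x + deg_in ((\<lambda>i. {v, i}) ` G) x"
        unfolding M_def by (rule deg_Un[OF finW finSG])
      show ?thesis
      proof (cases "x = v")
        case True
        have "deg_in ((\<lambda>i. {v, i}) ` G) x = card G"
        proof -
          have "{e \<in> (\<lambda>i. {v, i}) ` G. v \<in> e} = (\<lambda>i. {v, i}) ` G" by auto
          then show ?thesis unfolding deg_in_def True using inj by (simp add: card_image)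
        qed
        then show ?thesis using le degW[of x] True G2 by simp
      next
        case False
        have "{e \<in> (\<lambda>i. {v, i}) ` G. x \<in> e} \<subseteq> {{v, x}}" using False by auto
        then have "card {e \<in> (\<lambda>i. {v, i}) ` G. x \<in> e} \<le> card {{v, x}}" by (intro card_mono) auto
        then have c1: "deg_in ((\<lambda>i. {v, i}) ` G) x \<le> 1" unfolding deg_in_def by simp
        show ?thesis
        proof (cases "x \<in> G")
          case True
          then show ?thesis using le c1 degW[of x] GU by fastforce
        next
          case xG: False
          have "{e \<in> (\<lambda>i. {v, i}) ` G. x \<in> e} = {}" using False xG by auto
          then have "deg_in ((\<lambda>i. {v, i}) ` G) x = 0" unfolding deg_in_def by (simp only: card.empty)
          then show ?thesis using le degW[of x] by simp
        qed
      qed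
    qed
    show ?thesis using ME dg cM FM unfolding is_2matching_def by blast
  qed
  have finE': "finite E'" using finE unfolding E'def by simp
  have E'E: "E' \<subseteq> E" unfolding E'def by auto
  have UN: "U \<subseteq> N" unfolding U_def by auto
  have finU: "finite U" using UN finN finite_subset by blast
  have maxE: "max_2matching E M \<Longrightarrow> is_2matching E M \<and> card M = nu2 E" for M
    unfolding max_2matching_def by simp
  have nuE': "nu2 E' = (\<Sum>i\<in>N. a i)"
  proof (rule antisym)
    obtain M' where M': "max_2matching E' M'" using nu2_ex[OF finE'] by blast
    then have M'2: "is_2matching E' M'" and cM': "card M' = nu2 E'" unfolding max_2matching_def by auto
    have M'E: "is_2matching E M'" using M'2 E'E unfolding is_2matching_def by blast
    have "F M' = {}" using M'2 unfolding F_def is_2matching_def E'def by auto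
    then show "nu2 E' \<le> (\<Sum>i\<in>N. a i)" using bound[OF M'E] cM' by simp
  next
    obtain M0 where M0: "is_2matching E M0" "card M0 = (\<Sum>i\<in>N. a i)" "F M0 = {}"
      using constr[of "{}"] by auto
    have "deg_in M0 v = 0" using degv[OF M0(1)] M0(3) by simp
    then have "{e \<in> M0. v \<in> e} = {}" unfolding deg_in_def using finM[OF M0(1)] by simp
    then have "M0 \<subseteq> E'" using M0(1) unfolding is_2matching_def E'def by blast
    then have "is_2matching E' M0" using M0(1) unfolding is_2matching_def by blast
    then show "(\<Sum>i\<in>N. a i) \<le> nu2 E'" using nu2_ge[OF finE'] M0(2) by metis
  qed
  have nuE: "nu2 E = (\<Sum>i\<in>N. a i) + min 2 (card U)"
  proof (rule antisym)
    obtain M where M: "max_2matching E M" using nu2_ex[OF finE] by blast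
    then have M2: "is_2matching E M" and cM: "card M = nu2 E" unfolding max_2matching_def by auto
    have "card (F M \<inter> U) \<le> card (F M)" using finF by (intro card_mono) auto
    moreover have "card (F M \<inter> U) \<le> card U" using finU by (intro card_mono) auto
    ultimately have "card (F M \<inter> U) \<le> min 2 (card U)" using F2[OF M2] by simp
    then show "nu2 E \<le> (\<Sum>i\<in>N. a i) + min 2 (card U)" using bound[OF M2] cM
      by (metis add_le_mono le_refl order_trans)
  next
    obtain G where G: "G \<subseteq> U" "card G = min 2 (card U)"
      using obtain_subset_with_card_n[of "min 2 (card U)" U] by auto
    then obtain M where M: "is_2matching E M" "card M = (\<Sum>i\<in>N. a i) + card G"
      using constr[of G] by auto
    then show "(\<Sum>i\<in>N. a i) + min 2 (card U) \<le> nu2 E" using nu2_ge[OF finE M(1)] G by simp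
  qed
  have dval: "d = int (min 2 (card U))" unfolding d_def using nuE nuE' unfolding E'_def by simp
  have P1: "d \<in> {0, 1, 2}" using dval by (cases "card U") (auto simp: min_def)
  have P2: "d = 2 \<longleftrightarrow> saturated_vertex E v"
  proof
    assume "d = 2"
    then have U2: "card U \<ge> 2" using dval by (simp add: min_def split: if_splits)
    show "saturated_vertex E v" unfolding saturated_vertex_def
    proof (intro allI impI)
      fix M assume "max_2matching E M"
      then have M2: "is_2matching E M" and cM: "card M = nu2 E" unfolding max_2matching_def by auto
      have "card (F M \<inter> U) \<le> card (F M)" using finF by (intro card_mono) auto
      then have "card (F M) \<ge> 2" using bound[OF M2] cM nuE U2 by simp
      then show "deg_in M v = 2" using degv[OF M2] F2[OF M2] by simp
    qed
  next
    assume sat: "saturated_vertex E v"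
    show "d = 2"
    proof (rule ccontr)
      assume "d \<noteq> 2"
      then have U1: "card U \<le> 1" using dval by (simp add: min_def split: if_splits)
      obtain M where M: "is_2matching E M" "card M = (\<Sum>i\<in>N. a i) + card U" "F M = U"
        using constr[of U] U1 by auto
      have "max_2matching E M" using M nuE U1 unfolding max_2matching_def by simp
      then have "deg_in M v = 2" using sat unfolding saturated_vertex_def by blast
      then show False using degv[OF M(1)] M(3) U1 by simp
    qed
  qed
  have P3: "d = 1 \<longleftrightarrow> (\<exists>j \<in> N. saturated_edge E {v, j} \<and>
                    (\<forall>i \<in> N - {j}. saturated_vertex (A i) i))"
  proof
    assume "d = 1"
    then have "card U = 1" using dval by (simp add: min_def split: if_splits)
    then obtain j where Uj: "U = {j}" by (rule card_1_singletonE)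
    then have jN: "j \<in> N" using UN by auto
    have se: "saturated_edge E {v, j}" unfolding saturated_edge_def
    proof (intro allI impI)
      fix M assume "max_2matching E M"
      then have M2: "is_2matching E M" and cM: "card M = nu2 E" unfolding max_2matching_def by auto
      have "card (F M \<inter> U) \<ge> 1" using bound[OF M2] cM nuE Uj by simp
      then have "j \<in> F M" using Uj by (cases "j \<in> F M") auto
      then show "{v, j} \<in> M" unfolding F_def by simp
    qed
    have "\<forall>i \<in> N - {j}. saturated_vertex (A i) i" using Uj unfolding U_def by auto
    then show "\<exists>j \<in> N. saturated_edge E {v, j} \<and> (\<forall>i \<in> N - {j}. saturated_vertex (A i) i)"
      using jN se by blast
  next
    assume "\<exists>j \<in> N. saturated_edge E {v, j} \<and> (\<forall>i \<in> N - {j}. saturated_vertex (A i) i)"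
    then obtain j where jN: "j \<in> N" and se: "saturated_edge E {v, j}"
      and sv: "\<forall>i \<in> N - {j}. saturated_vertex (A i) i" by blast
    have Usub: "U \<subseteq> {j}" using sv unfolding U_def by auto
    have "U \<noteq> {}"
    proof
      assume U0: "U = {}"
      obtain M where M: "is_2matching E M" "card M = (\<Sum>i\<in>N. a i) + card U" "F M = U"
        using constr[of U] U0 by auto
      have "max_2matching E M" using M nuE U0 unfolding max_2matching_def by simp
      then have "{v, j} \<in> M" using se unfolding saturated_edge_def by blast
      then have "j \<in> F M" unfolding F_def using jN by simp
      then show False using M(3) U0 by simp
    qed
    then have "U = {j}" using Usub by blast
    then show "d = 1" using dval by simp
  qed
  have P4: "d = 0 \<longleftrightarrow> (\<forall>i \<in> N. saturated_vertex (A i) i)"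
  proof -
    have "d = 0 \<longleftrightarrow> U = {}" using dval finU by (auto simp: min_def)
    also have "\<dots> \<longleftrightarrow> (\<forall>i \<in> N. saturated_vertex (A i) i)" unfolding U_def by auto
    finally show ?thesis .
  qed
  show ?thesis using P1 P2 P3 P4 by blast
qed




lemma adj_sym: "(x, y) \<in> adj_rel E \<longleftrightarrow> (y, x) \<in> adj_rel E"
  unfolding adj_rel_def by (simp add: insert_commute)

lemma adj_rtr_sym: "(x, y) \<in> (adj_rel E)\<^sup>* \<Longrightarrow> (y, x) \<in> (adj_rel E)\<^sup>*"
proof (induction rule: rtrancl_induct)
  case base then show ?case by simp
next
  case (step y z)
  have "(z, y) \<in> adj_rel E" using step(2) by (simp add: adj_rel_def insert_commute)
  then show ?case using step(3) by (rule converse_rtrancl_into_rtrancl)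
qed

lemma reach_nb:
  assumes "(u, v) \<in> (adj_rel E)\<^sup>*"
  shows "u \<noteq> v \<longrightarrow> (\<exists>i\<in>neighbours E v. (i, u) \<in> (adj_rel (del_vertex_E E v))\<^sup>*)"
  using assms
proof (induction rule: converse_rtrancl_induct)
  case base then show ?case by simp
next
  case (step u u')
  show ?case
  proof
    assume uv: "u \<noteq> v"
    have e: "{u, u'} \<in> E" using step(1) unfolding adj_rel_def by simp
    show "\<exists>i\<in>neighbours E v. (i, u) \<in> (adj_rel (del_vertex_E E v))\<^sup>*"
    proof (cases "u' = v")
      case True
      then have "u \<in> neighbours E v" using e unfolding neighbours_def by (simp add: insert_commute)
      then show ?thesis by blast
    next
      case False
      then obtain i where iN: "i \<in> neighbours E v" and r: "(i, u') \<in> (adj_rel (del_vertex_E E v))\<^sup>*"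
        using step(3) by blast
      have "{u', u} \<in> del_vertex_E E v" using e uv False unfolding del_vertex_E_def
        by (simp add: insert_commute)
      then have "(u', u) \<in> adj_rel (del_vertex_E E v)" unfolding adj_rel_def by simp
      then have "(i, u) \<in> (adj_rel (del_vertex_E E v))\<^sup>*" using r by (rule rtrancl_into_rtrancl[rotated])
      then show ?thesis using iN by blast
    qed
  qed
qed

lemma path_idx:
  assumes "rtrancl_path r x ys y"
  shows "(\<forall>k<length ys. r ((x # ys) ! k) (ys ! k)) \<and> last (x # ys) = y"
  using assms
proof (induction rule: rtrancl_path.induct)
  case (base x) then show ?case by simp
next
  case (step x y ys z)
  have "\<forall>k<length (y # ys). r ((x # y # ys) ! k) ((y # ys) ! k)"
  proof (intro allI impI)
    fix k assume "k < length (y # ys)"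
    then show "r ((x # y # ys) ! k) ((y # ys) ! k)"
      using step by (cases k) simp_all
  qed
  then show ?case using step by simp
qed

lemma no_two_nb:
  assumes sg: "simple_graph V E" and nc: "\<not> has_cycle E"
    and iN: "i \<in> neighbours E v" and jN: "j \<in> neighbours E v" and ij: "i \<noteq> j"
    and rij: "(i, j) \<in> (adj_rel (del_vertex_E E v))\<^sup>*"
  shows False
proof -
  define r where "r = (\<lambda>a b. (a, b) \<in> adj_rel (del_vertex_E E v))"
  have "r\<^sup>*\<^sup>* i j" using rij unfolding r_def
    by (induction rule: rtrancl_induct) (auto intro: rtranclp.rtrancl_into_rtrancl)
  then obtain ys0 where "rtrancl_path r i ys0 j" using rtranclp_eq_rtrancl_path by metis
  then obtain ys where p: "rtrancl_path r i ys j" and dis: "distinct (i # ys)"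
    by (rule rtrancl_path_distinct)
  have idx: "\<forall>k<length ys. r ((i # ys) ! k) (ys ! k)" and lst: "last (i # ys) = j"
    using path_idx[OF p] by auto
  have ysne: "ys \<noteq> []" using lst ij by auto
  have viE: "{v, i} \<in> E" using iN unfolding neighbours_def by simp
  have vjE: "{j, v} \<in> E" using jN unfolding neighbours_def by (simp add: insert_commute)
  have vi: "v \<noteq> i"
  proof
    assume "v = i"
    then have "{v} \<in> E" using viE by simp
    then obtain x y where xy: "x \<noteq> y" "{v} = {x, y}" using sg unfolding simple_graph_def by blast
    then have "x = v" "y = v" by (metis insertI1 singletonD, metis insertI1 insert_commute singletonD)
    then show False using xy by simp
  qed
  have redge: "{(i # ys) ! k, ys ! k} \<in> E \<and> v \<noteq> ys ! k" if "k < length ys" for k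
    using idx that unfolding r_def adj_rel_def del_vertex_E_def by auto
  have vys: "v \<notin> set ys"
  proof
    assume "v \<in> set ys"
    then obtain k where k: "k < length ys" "ys ! k = v" by (metis in_set_conv_nth)
    then show False using redge[OF k(1)] by simp
  qed
  define xs where "xs = v # i # ys"
  have len: "length xs = Suc (Suc (length ys))" unfolding xs_def by simp
  have "length xs \<ge> 3" using len ysne by (cases ys) auto
  moreover have "distinct xs" unfolding xs_def using dis vys vi by auto
  moreover have "\<forall>t < length xs. {xs ! t, xs ! ((t + 1) mod length xs)} \<in> E"
  proof (intro allI impI)
    fix t assume t: "t < length xs"
    show "{xs ! t, xs ! ((t + 1) mod length xs)} \<in> E"
    proof (cases t)
      case 0
      then show ?thesis using viE len unfolding xs_def by simp
    next
      case (Suc k)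
      show ?thesis
      proof (cases "k < length ys")
        case True
        have m: "(t + 1) mod length xs = Suc (Suc k)" using True len Suc by simp
        have "xs ! t = (i # ys) ! k" "xs ! Suc (Suc k) = ys ! k" unfolding xs_def Suc by simp_all
        then show ?thesis using m redge[OF True] by simp
      next
        case False
        then have k: "k = length ys" using t len Suc by simp
        have m: "(t + 1) mod length xs = 0" using k len Suc by simp
        have "xs ! t = last (i # ys)" unfolding xs_def Suc k by (simp add: last_conv_nth)
        then show ?thesis using m lst vjE unfolding xs_def by simp
      qed
    qed
  qed
  ultimately have "has_cycle E" unfolding has_cycle_def by blast
  then show False using nc by simp
qed




theorem lemma2p5:
  fixes V :: "'a set" and E :: "'a set set" and v :: 'a
  assumes "is_tree V E" and "v \<in> V"
  defines "d \<equiv> int (nu2 E) - int (nu2 (del_vertex_E E v))"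
      and "Ti \<equiv> (\<lambda>w. comp_E (del_vertex_V V v) (del_vertex_E E v) w)"
  shows "d \<in> {0, 1, 2}
    \<and> (d = 2 \<longleftrightarrow> saturated_vertex E v)
    \<and> (d = 1 \<longleftrightarrow> (\<exists>j \<in> neighbours E v. saturated_edge E {v, j} \<and>
                    (\<forall>i \<in> neighbours E v - {j}. saturated_vertex (Ti i) i)))
    \<and> (d = 0 \<longleftrightarrow> (\<forall>i \<in> neighbours E v. saturated_vertex (Ti i) i))"
proof -
  define E' where "E' = del_vertex_E E v"
  define C where "C i = comp_V (del_vertex_V V v) E' i" for i
  have sg: "simple_graph V E" and conn: "connected_graph V E" and nc: "\<not> has_cycle E"
    using assms(1) unfolding is_tree_def by auto
  have finV: "finite V" using sg unfolding simple_graph_def by simp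
  have edg0: "\<forall>e\<in>E. \<exists>x y. x \<noteq> y \<and> x \<in> V \<and> y \<in> V \<and> e = {x, y}"
    using sg unfolding simple_graph_def by simp
  have edg: "\<forall>e\<in>E. \<exists>x y. x \<noteq> y \<and> e = {x, y}"
  proof
    fix e assume "e \<in> E"
    then obtain x y where "x \<noteq> y" "e = {x, y}" using edg0 by blast
    then show "\<exists>x y. x \<noteq> y \<and> e = {x, y}" by blast
  qed
  have "E \<subseteq> Pow V"
  proof
    fix e assume "e \<in> E"
    then obtain x y where "x \<in> V" "y \<in> V" "e = {x, y}" using edg0 by blast
    then show "e \<in> Pow V" by simp
  qed
  then have finE: "finite E" by (rule finite_subset) (simp add: finV)
  have Cdef: "C i = {u \<in> V - {v}. (i, u) \<in> (adj_rel E')\<^sup>*}" for i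
    unfolding C_def comp_V_def del_vertex_V_def by simp
  have Tidef: "Ti i = {e \<in> E'. e \<subseteq> C i}" for i
    unfolding Ti_def comp_E_def C_def E'_def by simp
  have nbV: "i \<in> V \<and> i \<noteq> v" if "i \<in> neighbours E v" for i
  proof -
    have "{v, i} \<in> E" using that unfolding neighbours_def by simp
    then obtain x y where "x \<noteq> y" "x \<in> V" "y \<in> V" "{v, i} = {x, y}" using edg0 by blast
    then have "(v = x \<and> i = y) \<or> (v = y \<and> i = x)" by (simp add: doubleton_eq_iff)
    then show ?thesis using \<open>x \<noteq> y\<close> \<open>x \<in> V\<close> \<open>y \<in> V\<close> by auto
  qed
  have cover: "del_vertex_E E v = \<Union> (Ti ` neighbours E v)"
  proof
    show "\<Union> (Ti ` neighbours E v) \<subseteq> del_vertex_E E v" unfolding Tidef E'_def by auto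
    show "del_vertex_E E v \<subseteq> \<Union> (Ti ` neighbours E v)"
    proof
      fix e assume eE': "e \<in> del_vertex_E E v"
      then have eE: "e \<in> E" and ve: "v \<notin> e" unfolding del_vertex_E_def by auto
      obtain x y where xy: "x \<in> V" "y \<in> V" "e = {x, y}" using edg0 eE by blast
      have xv: "x \<noteq> v" "y \<noteq> v" using ve xy by auto
      have "(x, v) \<in> (adj_rel E)\<^sup>*" using conn xy(1) assms(2) unfolding connected_graph_def by simp
      then obtain i where iN: "i \<in> neighbours E v" and ix: "(i, x) \<in> (adj_rel E')\<^sup>*"
        using reach_nb[of x v E] xv(1) unfolding E'_def by (meson \<open>(x, v) \<in> (adj_rel E)\<^sup>*\<close>)
      have "(x, y) \<in> adj_rel E'" using eE' xy unfolding adj_rel_def E'_def by simp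
      then have iy: "(i, y) \<in> (adj_rel E')\<^sup>*" using ix by (rule rtrancl_into_rtrancl[rotated])
      have "e \<subseteq> C i" unfolding Cdef using xy xv ix iy by auto
      then have "e \<in> Ti i" unfolding Tidef using eE' unfolding E'_def by simp
      then show "e \<in> \<Union> (Ti ` neighbours E v)" using iN by blast
    qed
  qed
  have AC: "\<forall>i\<in>neighbours E v. \<forall>e\<in>Ti i. e \<subseteq> C i" unfolding Tidef by auto
  have iC: "\<forall>i\<in>neighbours E v. i \<in> C i" unfolding Cdef using nbV by auto
  have vC: "\<forall>i\<in>neighbours E v. v \<notin> C i" unfolding Cdef by auto
  have disj: "\<forall>i\<in>neighbours E v. \<forall>j\<in>neighbours E v. i \<noteq> j \<longrightarrow> C i \<inter> C j = {}"
  proof (intro ballI impI)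
    fix i j assume iN: "i \<in> neighbours E v" and jN: "j \<in> neighbours E v" and ij: "i \<noteq> j"
    show "C i \<inter> C j = {}"
    proof (rule ccontr)
      assume "C i \<inter> C j \<noteq> {}"
      then obtain x where xi: "x \<in> C i" and xj: "x \<in> C j" by blast
      have ix: "(i, x) \<in> (adj_rel E')\<^sup>*" using xi unfolding Cdef by simp
      have jx: "(j, x) \<in> (adj_rel E')\<^sup>*" using xj unfolding Cdef by simp
      have "(x, j) \<in> (adj_rel E')\<^sup>*" using jx by (rule adj_rtr_sym)
      with ix have "(i, j) \<in> (adj_rel E')\<^sup>*" by (rule rtrancl_trans)
      then show False unfolding E'_def by (rule no_two_nb[OF sg nc iN jN ij])
    qed
  qed
  show ?thesis
    using comb_main[where E=E and v=v and N="neighbours E v" and A=Ti and C=C, OF finE edg refl cover AC iC vC disj]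
    unfolding d_def .
qed


end
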